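(* Let $\mathcal L$ be an expansion of the language of ordered groups and let $G$ be an $\mathcal L$-structure whose reduct is a densely ordered abelian group which is definably complete. Fix an $\mathcal L$-formula $\psi(t,y)$ (possibly with parameters) such that each set $\psi(t,G)$, $t\in G$, is pseudo-finite, $\psi(t_1,G)\subseteq\psi(t_2,G)$ whenever $t_1<t_2$, and $\bigcup_{t\in G}\psi(t,G)=G$. Then for all $a<b$ in $G$, the interval $[a,b]$ is definably compact (with respect to $\psi$): for every $\mathcal L$-formula $\varphi(x,y)$ (with parameters) such that each $\varphi(u,G)$, $u\in G$, is open and $[a,b]\subseteq\bigcup_{u\in G}\varphi(u,G)$, there exists $t_0\in G$ with $[a,b]\subseteq\bigcup_{u\in\psi(t_0,G)}\varphi(u,G)$.
   Context: Definable means definable by an $\mathcal L$-formula with parameters from $G$; for a formula $\varphi(x,y)$ and $a\in G$, $\varphi(a,G)=\{b\in G: G\models\varphi(a,b)\}$. $G$ carries the order topology (base: open intervals). A Dedekind cut is a nonempty downward closed subset of $G$; a gap is a cut $C\ne G$ with no least upper bound in $G$; $G$ is definably complete if it has no definable gap. A definable subset $D\subseteq G$ is pseudo-finite if it is discrete, closed, and bounded. *)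

theory Defs
  imports Main
begin

text \<open>A first-order expansion of the language of ordered groups on a universe of type 'a,
  together with all parameters from G, is represented (van den Dries style) by the family
  S n of its definable subsets of G^n, where tuples of length n are lists of length n.
  The definable sets (with parameters) of any L-structure form such a family, and every such
  family is the family of definable sets of a suitable expansion (one predicate per set).\<close>

definition definable_structure :: "(nat \<Rightarrow> ('a::linordered_ab_group_add) list set set) \<Rightarrow> bool" where
  "definable_structure S \<longleftrightarrow>
     (\<forall>n. \<forall>A\<in>S n. \<forall>xs\<in>A. length xs = n) \<and>
     (\<forall>n. {xs. length xs = n} \<in> S n) \<and>
     (\<forall>n. \<forall>A\<in>S n. \<forall>B\<in>S n. A \<union> B \<in> S n) \<and>
     (\<forall>n. \<forall>A\<in>S n. {xs. length xs = n} - A \<in> S n) \<and>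
     (\<forall>n. \<forall>A\<in>S n. {xs @ [x] | xs x. xs \<in> A} \<in> S (Suc n)) \<and>
     (\<forall>n. \<forall>A\<in>S n. {x # xs | xs x. xs \<in> A} \<in> S (Suc n)) \<and>
     (\<forall>n i j. i < n \<longrightarrow> j < n \<longrightarrow> {xs. length xs = n \<and> xs ! i = xs ! j} \<in> S n) \<and>
     (\<forall>n. \<forall>A\<in>S (Suc n). butlast ` A \<in> S n) \<and>
     (\<forall>c. {[c]} \<in> S 1) \<and>
     {[x, y, z] | x y z. z = x + y} \<in> S 3 \<and>
     {[x, y] | x y. x < y} \<in> S 2"

definition definable1 :: "(nat \<Rightarrow> 'a list set set) \<Rightarrow> 'a set \<Rightarrow> bool" where
  "definable1 S X \<longleftrightarrow> (\<lambda>x. [x]) ` X \<in> S 1"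

definition fiber :: "'a list set \<Rightarrow> 'a \<Rightarrow> 'a set" where
  "fiber P a = {b. [a, b] \<in> P}"

definition open_G :: "('a::linorder) set \<Rightarrow> bool" where
  "open_G U \<longleftrightarrow> (\<forall>x\<in>U. \<exists>a b. a < x \<and> x < b \<and> {a<..<b} \<subseteq> U)"

definition closed_G :: "('a::linorder) set \<Rightarrow> bool" where
  "closed_G D \<longleftrightarrow> open_G (- D)"

definition discrete_G :: "('a::linorder) set \<Rightarrow> bool" where
  "discrete_G D \<longleftrightarrow> (\<forall>x\<in>D. \<exists>U. open_G U \<and> U \<inter> D = {x})"

definition bounded_G :: "('a::linorder) set \<Rightarrow> bool" where
  "bounded_G D \<longleftrightarrow> (\<exists>l u. D \<subseteq> {l..u})"

definition pseudo_finite :: "(nat \<Rightarrow> 'a list set set) \<Rightarrow> ('a::linorder) set \<Rightarrow> bool" where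
  "pseudo_finite S D \<longleftrightarrow> definable1 S D \<and> discrete_G D \<and> closed_G D \<and> bounded_G D"

definition is_cut :: "('a::linorder) set \<Rightarrow> bool" where
  "is_cut C \<longleftrightarrow> C \<noteq> {} \<and> (\<forall>x\<in>C. \<forall>y. y \<le> x \<longrightarrow> y \<in> C)"

definition has_lub :: "('a::linorder) set \<Rightarrow> bool" where
  "has_lub C \<longleftrightarrow> (\<exists>s. (\<forall>x\<in>C. x \<le> s) \<and> (\<forall>u. (\<forall>x\<in>C. x \<le> u) \<longrightarrow> s \<le> u))"

definition is_gap :: "('a::linorder) set \<Rightarrow> bool" where
  "is_gap C \<longleftrightarrow> is_cut C \<and> C \<noteq> UNIV \<and> \<not> has_lub C"

definition definably_complete :: "(nat \<Rightarrow> ('a::linorder) list set set) \<Rightarrow> bool" where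
  "definably_complete S \<longleftrightarrow> (\<forall>C::'a set. definable1 S C \<longrightarrow> \<not> is_gap C)"

end

theory Submission
  imports Defs
begin

definition dfn :: "(nat \<Rightarrow> 'a list set set) \<Rightarrow> nat \<Rightarrow> ('a list \<Rightarrow> bool) \<Rightarrow> bool" where
  "dfn S n P \<longleftrightarrow> {xs. length xs = n \<and> P xs} \<in> S n"

locale dstr =
  fixes S :: "nat \<Rightarrow> ('a::linordered_ab_group_add) list set set"
  assumes DS: "definable_structure S"
begin

lemma c_all: "(\<forall>n. \<forall>A\<in>S n. \<forall>xs\<in>A. length xs = n) \<and>
     (\<forall>n. {xs. length xs = n} \<in> S n) \<and>
     (\<forall>n. \<forall>A\<in>S n. \<forall>B\<in>S n. A \<union> B \<in> S n) \<and>
     (\<forall>n. \<forall>A\<in>S n. {xs. length xs = n} - A \<in> S n) \<and>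
     (\<forall>n. \<forall>A\<in>S n. {xs @ [x] | xs x. xs \<in> A} \<in> S (Suc n)) \<and>
     (\<forall>n. \<forall>A\<in>S n. {x # xs | xs x. xs \<in> A} \<in> S (Suc n)) \<and>
     (\<forall>n i j. i < n \<longrightarrow> j < n \<longrightarrow> {xs. length xs = n \<and> xs ! i = xs ! j} \<in> S n) \<and>
     (\<forall>n. \<forall>A\<in>S (Suc n). butlast ` A \<in> S n) \<and>
     (\<forall>c. {[c]} \<in> S 1) \<and>
     {[x, y, z] | x y z. z = x + y} \<in> S 3 \<and>
     {[x, y] | x y. x < y} \<in> S 2"
  using DS unfolding definable_structure_def .
lemmas c1 = c_all[THEN conjunct1]
lemmas c2 = c_all[THEN conjunct2, THEN conjunct1]
lemmas c3 = c_all[THEN conjunct2, THEN conjunct2, THEN conjunct1]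
lemmas c4 = c_all[THEN conjunct2, THEN conjunct2, THEN conjunct2, THEN conjunct1]
lemmas c6 = c_all[THEN conjunct2, THEN conjunct2, THEN conjunct2, THEN conjunct2, THEN conjunct2, THEN conjunct1]
lemmas c7 = c_all[THEN conjunct2, THEN conjunct2, THEN conjunct2, THEN conjunct2, THEN conjunct2, THEN conjunct2, THEN conjunct1]
lemmas c8 = c_all[THEN conjunct2, THEN conjunct2, THEN conjunct2, THEN conjunct2, THEN conjunct2, THEN conjunct2, THEN conjunct2, THEN conjunct1]
lemmas c9 = c_all[THEN conjunct2, THEN conjunct2, THEN conjunct2, THEN conjunct2, THEN conjunct2, THEN conjunct2, THEN conjunct2, THEN conjunct2, THEN conjunct1]
lemmas c11 = c_all[THEN conjunct2, THEN conjunct2, THEN conjunct2, THEN conjunct2, THEN conjunct2, THEN conjunct2, THEN conjunct2, THEN conjunct2, THEN conjunct2, THEN conjunct2]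

lemma ax_len: "A \<in> S n \<Longrightarrow> xs \<in> A \<Longrightarrow> length xs = n"
  using c1 by blast
lemma ax_univ: "{xs. length xs = n} \<in> S n"
  using c2 by blast
lemma ax_un: "A \<in> S n \<Longrightarrow> B \<in> S n \<Longrightarrow> A \<union> B \<in> S n"
  using c3 by blast
lemma ax_compl: "A \<in> S n \<Longrightarrow> {xs. length xs = n} - A \<in> S n"
  using c4 by blast
lemma ax_cons: "A \<in> S n \<Longrightarrow> {x # xs | xs x. xs \<in> A} \<in> S (Suc n)"
  using c6 by blast
lemma ax_diag: "i < n \<Longrightarrow> j < n \<Longrightarrow> {xs. length xs = n \<and> xs ! i = xs ! j} \<in> S n"
  using c7 by blast
lemma ax_butlast: "A \<in> S (Suc n) \<Longrightarrow> butlast ` A \<in> S n"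
  using c8 by blast
lemma ax_const: "{[c]} \<in> S 1"
  using c9 by blast
lemma ax_less: "{[x, y] | x y. x < y} \<in> S 2"
  using c11 by blast

lemma dfn_set: "A \<in> S n \<Longrightarrow> dfn S n (\<lambda>xs. xs \<in> A)"
proof -
  assume A: "A \<in> S n"
  have "{xs. length xs = n \<and> xs \<in> A} = A" using ax_len[OF A] by blast
  thus ?thesis using A unfolding dfn_def by simp
qed

lemma dfn_cong: "dfn S n P \<Longrightarrow> (\<And>xs. length xs = n \<Longrightarrow> P xs = Q xs) \<Longrightarrow> dfn S n Q"
proof -
  assume "dfn S n P" "\<And>xs. length xs = n \<Longrightarrow> P xs = Q xs"
  moreover have "{xs. length xs = n \<and> P xs} = {xs. length xs = n \<and> Q xs}"
    using calculation(2) by blast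
  ultimately show ?thesis unfolding dfn_def by simp
qed

lemma dfn_or: "dfn S n P \<Longrightarrow> dfn S n Q \<Longrightarrow> dfn S n (\<lambda>xs. P xs \<or> Q xs)"
proof -
  assume "dfn S n P" "dfn S n Q"
  then have "{xs. length xs = n \<and> P xs} \<union> {xs. length xs = n \<and> Q xs} \<in> S n"
    unfolding dfn_def by (rule ax_un)
  moreover have "{xs. length xs = n \<and> P xs} \<union> {xs. length xs = n \<and> Q xs} = {xs. length xs = n \<and> (P xs \<or> Q xs)}" by blast
  ultimately show ?thesis unfolding dfn_def by simp
qed

lemma dfn_not: "dfn S n P \<Longrightarrow> dfn S n (\<lambda>xs. \<not> P xs)"
proof -
  assume "dfn S n P"
  then have "{xs. length xs = n} - {xs. length xs = n \<and> P xs} \<in> S n"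
    unfolding dfn_def by (rule ax_compl)
  moreover have "{xs. length xs = n} - {xs. length xs = n \<and> P xs} = {xs. length xs = n \<and> \<not> P xs}" by blast
  ultimately show ?thesis unfolding dfn_def by simp
qed

lemma dfn_and: "dfn S n P \<Longrightarrow> dfn S n Q \<Longrightarrow> dfn S n (\<lambda>xs. P xs \<and> Q xs)"
proof -
  assume "dfn S n P" "dfn S n Q"
  then have "dfn S n (\<lambda>xs. \<not> (\<not> P xs \<or> \<not> Q xs))" by (intro dfn_not dfn_or)
  thus ?thesis by (rule dfn_cong) simp
qed

lemma dfn_imp: "dfn S n P \<Longrightarrow> dfn S n Q \<Longrightarrow> dfn S n (\<lambda>xs. P xs \<longrightarrow> Q xs)"
proof -
  assume "dfn S n P" "dfn S n Q"
  then have "dfn S n (\<lambda>xs. \<not> P xs \<or> Q xs)" by (intro dfn_not dfn_or)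
  thus ?thesis by (rule dfn_cong) simp
qed

lemma dfn_ex: "dfn S (Suc n) P \<Longrightarrow> dfn S n (\<lambda>xs. \<exists>x. P (xs @ [x]))"
proof -
  assume "dfn S (Suc n) P"
  then have "butlast ` {xs. length xs = Suc n \<and> P xs} \<in> S n"
    unfolding dfn_def by (rule ax_butlast)
  moreover have "butlast ` {xs. length xs = Suc n \<and> P xs} = {xs. length xs = n \<and> (\<exists>x. P (xs @ [x]))}"
  proof
    show "butlast ` {xs. length xs = Suc n \<and> P xs} \<subseteq> {xs. length xs = n \<and> (\<exists>x. P (xs @ [x]))}"
    proof
      fix ys assume "ys \<in> butlast ` {xs. length xs = Suc n \<and> P xs}"
      then obtain xs where xs: "length xs = Suc n" "P xs" "ys = butlast xs" by blast
      then obtain y zs where "xs = zs @ [y]" "length zs = n" by (metis length_Suc_conv_rev)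
      thus "ys \<in> {xs. length xs = n \<and> (\<exists>x. P (xs @ [x]))}" using xs by auto
    qed
  next
    show "{xs. length xs = n \<and> (\<exists>x. P (xs @ [x]))} \<subseteq> butlast ` {xs. length xs = Suc n \<and> P xs}"
    proof
      fix ys assume "ys \<in> {xs. length xs = n \<and> (\<exists>x. P (xs @ [x]))}"
      then obtain x where "length ys = n" "P (ys @ [x])" by blast
      then show "ys \<in> butlast ` {xs. length xs = Suc n \<and> P xs}"
        by (intro image_eqI[where x="ys @ [x]"]) auto
    qed
  qed
  ultimately show ?thesis unfolding dfn_def by simp
qed

lemma dfn_all: "dfn S (Suc n) P \<Longrightarrow> dfn S n (\<lambda>xs. \<forall>x. P (xs @ [x]))"
proof -
  assume "dfn S (Suc n) P"
  then have "dfn S n (\<lambda>xs. \<not> (\<exists>x. \<not> P (xs @ [x])))" by (intro dfn_not dfn_ex)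
  thus ?thesis by (rule dfn_cong) simp
qed

lemma dfn_exs: "dfn S (n + m) P \<Longrightarrow> dfn S n (\<lambda>xs. \<exists>zs. length zs = m \<and> P (xs @ zs))"
proof (induction m arbitrary: P)
  case 0
  then have "dfn S n P" by simp
  then show ?case by (rule dfn_cong) auto
next
  case (Suc m)
  then have "dfn S (Suc (n + m)) P" by simp
  then have "dfn S (n + m) (\<lambda>ys. \<exists>x. P (ys @ [x]))" by (rule dfn_ex)
  then have "dfn S n (\<lambda>xs. \<exists>zs. length zs = m \<and> (\<exists>x. P ((xs @ zs) @ [x])))" by (rule Suc.IH)
  then show ?case
  proof (rule dfn_cong)
    fix xs :: "'a list"
    show "(\<exists>zs. length zs = m \<and> (\<exists>x. P ((xs @ zs) @ [x]))) = (\<exists>zs. length zs = Suc m \<and> P (xs @ zs))"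
    proof
      assume "\<exists>zs. length zs = m \<and> (\<exists>x. P ((xs @ zs) @ [x]))"
      then obtain zs x where "length zs = m" "P ((xs @ zs) @ [x])" by blast
      thus "\<exists>zs. length zs = Suc m \<and> P (xs @ zs)" by (intro exI[where x="zs @ [x]"]) auto
    next
      assume "\<exists>zs. length zs = Suc m \<and> P (xs @ zs)"
      then obtain zs where zs: "length zs = Suc m" "P (xs @ zs)" by blast
      then obtain y ys where "zs = ys @ [y]" "length ys = m" by (metis length_Suc_conv_rev)
      thus "\<exists>zs. length zs = m \<and> (\<exists>x. P ((xs @ zs) @ [x]))" using zs by auto
    qed
  qed
qed

lemma dfn_prepend: "dfn S m P \<Longrightarrow> dfn S (k + m) (\<lambda>ws. P (drop k ws))"
proof (induction k)
  case 0
  then show ?case by simp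
next
  case (Suc k)
  then have "{x # xs | xs x. xs \<in> {ws. length ws = k + m \<and> P (drop k ws)}} \<in> S (Suc (k + m))"
    unfolding dfn_def by (intro ax_cons) simp
  moreover have "{x # xs | xs x. xs \<in> {ws. length ws = k + m \<and> P (drop k ws)}}
      = {ws. length ws = Suc k + m \<and> P (drop (Suc k) ws)}"
  proof (intro set_eqI iffI)
    fix ws assume "ws \<in> {ws. length ws = Suc k + m \<and> P (drop (Suc k) ws)}"
    then show "ws \<in> {x # xs | xs x. xs \<in> {ws. length ws = k + m \<and> P (drop k ws)}}"
      by (cases ws) auto
  qed auto
  ultimately show ?case unfolding dfn_def by simp
qed

lemma dfn_diags: "(\<forall>j<m. f j < n) \<Longrightarrow> k \<le> m \<Longrightarrow> dfn S (n + m) (\<lambda>ws. \<forall>j<k. ws ! (f j) = ws ! (n + j))"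
proof (induction k)
  case 0
  have "dfn S (n + m) (\<lambda>ws. ws \<in> {xs. length xs = n + m})" by (rule dfn_set[OF ax_univ])
  then show ?case by (rule dfn_cong) simp
next
  case (Suc k)
  have "dfn S (n + m) (\<lambda>ws. ws \<in> {xs. length xs = n + m \<and> xs ! (f k) = xs ! (n + k)})"
  proof -
    have km: "k < m" using Suc.prems(2) by simp
    then have fk: "f k < n" using Suc.prems(1) by blast
    have a1: "f k < n + m" using fk by simp
    have a2: "n + k < n + m" using km by simp
    show ?thesis by (rule dfn_set, rule ax_diag[OF a1 a2])
  qed
  then have "dfn S (n + m) (\<lambda>ws. (\<forall>j<k. ws ! (f j) = ws ! (n + j)) \<and>
       ws \<in> {xs. length xs = n + m \<and> xs ! (f k) = xs ! (n + k)})"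
    using Suc by (intro dfn_and) auto
  then show ?case by (rule dfn_cong) (auto simp: less_Suc_eq)
qed

lemma dfn_reindex:
  assumes P: "dfn S m P" and f: "\<forall>i<m. f i < n"
  shows "dfn S n (\<lambda>xs. P (map (\<lambda>i. xs ! (f i)) [0..<m]))"
proof -
  have "dfn S (n + m) (\<lambda>ws. P (drop n ws) \<and> (\<forall>j<m. ws ! (f j) = ws ! (n + j)))"
    using P f by (intro dfn_and dfn_prepend dfn_diags) auto
  then have "dfn S n (\<lambda>xs. \<exists>zs. length zs = m \<and> (P (drop n (xs @ zs)) \<and>
      (\<forall>j<m. (xs @ zs) ! (f j) = (xs @ zs) ! (n + j))))"
    by (rule dfn_exs)
  then show ?thesis
  proof (rule dfn_cong)
    fix xs :: "'a list" assume len: "length xs = n"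
    have e: "(\<forall>j<m. (xs @ zs) ! (f j) = (xs @ zs) ! (n + j)) \<longleftrightarrow> (\<forall>j<m. xs ! (f j) = zs ! j)" for zs
      using f len by (auto simp: nth_append)
    show "(\<exists>zs. length zs = m \<and> (P (drop n (xs @ zs)) \<and>
      (\<forall>j<m. (xs @ zs) ! (f j) = (xs @ zs) ! (n + j)))) = P (map (\<lambda>i. xs ! (f i)) [0..<m])"
    proof
      assume "\<exists>zs. length zs = m \<and> (P (drop n (xs @ zs)) \<and>
        (\<forall>j<m. (xs @ zs) ! (f j) = (xs @ zs) ! (n + j)))"
      then obtain zs where zs: "length zs = m" "P zs" "\<forall>j<m. xs ! (f j) = zs ! j"
        using e len by auto
      have "zs = map (\<lambda>i. xs ! (f i)) [0..<m]"
        using zs by (intro nth_equalityI) auto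
      thus "P (map (\<lambda>i. xs ! (f i)) [0..<m])" using zs by simp
    next
      assume "P (map (\<lambda>i. xs ! (f i)) [0..<m])"
      thus "\<exists>zs. length zs = m \<and> (P (drop n (xs @ zs)) \<and>
        (\<forall>j<m. (xs @ zs) ! (f j) = (xs @ zs) ! (n + j)))"
        using e len by (intro exI[where x="map (\<lambda>i. xs ! (f i)) [0..<m]"]) auto
    qed
  qed
qed


lemma dfn_lt: assumes "i < n" "j < n" shows "dfn S n (\<lambda>xs. xs ! i < xs ! j)"
proof -
  have "dfn S 2 (\<lambda>xs. xs \<in> {[x, y] | x y. x < y})" by (rule dfn_set[OF ax_less])
  then have "dfn S 2 (\<lambda>zs. zs ! 0 < zs ! 1)"
    by (rule dfn_cong) (auto simp: length_Suc_conv numeral_eq_Suc)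
  then have "dfn S n (\<lambda>xs. (map (\<lambda>k. xs ! ((\<lambda>k. if k = 0 then i else j) k)) [0..<2]) ! 0
      < (map (\<lambda>k. xs ! ((\<lambda>k. if k = 0 then i else j) k)) [0..<2]) ! 1)"
    using assms by (intro dfn_reindex) auto
  then show ?thesis by (rule dfn_cong) (simp add: numeral_eq_Suc)
qed

lemma dfn_eqc: assumes "i < n" shows "dfn S n (\<lambda>xs. xs ! i = c)"
proof -
  have "dfn S 1 (\<lambda>xs. xs \<in> {[c]})" by (rule dfn_set[OF ax_const])
  then have "dfn S 1 (\<lambda>zs. zs ! 0 = c)"
    by (rule dfn_cong) (auto simp: length_Suc_conv)
  then have "dfn S n (\<lambda>xs. (map (\<lambda>k. xs ! ((\<lambda>k. i) k)) [0..<1]) ! 0 = c)"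
    using assms by (intro dfn_reindex) auto
  then show ?thesis by (rule dfn_cong) simp
qed

lemma dfn_ltc: assumes "i < n" shows "dfn S n (\<lambda>xs. xs ! i < c)"
proof -
  have "dfn S (Suc 1) (\<lambda>zs. zs ! 0 < zs ! 1 \<and> zs ! 1 = c)"
    by (intro dfn_and dfn_lt dfn_eqc) auto
  then have "dfn S 1 (\<lambda>xs. \<exists>z. (xs @ [z]) ! 0 < (xs @ [z]) ! 1 \<and> (xs @ [z]) ! 1 = c)"
    by (rule dfn_ex)
  then have "dfn S 1 (\<lambda>zs. zs ! 0 < c)"
    by (rule dfn_cong) (auto simp: length_Suc_conv)
  then have "dfn S n (\<lambda>xs. (map (\<lambda>k. xs ! ((\<lambda>k. i) k)) [0..<1]) ! 0 < c)"
    using assms by (intro dfn_reindex) auto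
  then show ?thesis by (rule dfn_cong) simp
qed

lemma dfn_mem2: assumes "A \<in> S 2" "i < n" "j < n" shows "dfn S n (\<lambda>xs. [xs ! i, xs ! j] \<in> A)"
proof -
  have "dfn S 2 (\<lambda>xs. xs \<in> A)" by (rule dfn_set[OF assms(1)])
  then have "dfn S n (\<lambda>xs. (map (\<lambda>k. xs ! ((\<lambda>k. if k = 0 then i else j) k)) [0..<2]) \<in> A)"
    using assms by (intro dfn_reindex) auto
  then show ?thesis by (rule dfn_cong) (simp add: numeral_eq_Suc)
qed

end

theorem theorem3p5:
  fixes S :: "nat \<Rightarrow> ('a::{linordered_ab_group_add, dense_order}) list set set"
    and Psi :: "'a list set"
  assumes "definable_structure S"
    and "definably_complete S"
    and "Psi \<in> S 2"
    and "\<forall>t. pseudo_finite S (fiber Psi t)"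
    and "\<forall>t1 t2. t1 < t2 \<longrightarrow> fiber Psi t1 \<subseteq> fiber Psi t2"
    and "(\<Union>t. fiber Psi t) = UNIV"
  shows "\<forall>a b. a < b \<longrightarrow>
           (\<forall>Phi \<in> S 2. (\<forall>u. open_G (fiber Phi u)) \<and> {a..b} \<subseteq> (\<Union>u. fiber Phi u)
              \<longrightarrow> (\<exists>t0. {a..b} \<subseteq> (\<Union>u\<in>fiber Psi t0. fiber Phi u)))"
proof (intro allI impI ballI)
  fix a b :: 'a and Phi
  assume ab: "a < b" and Phi: "Phi \<in> S 2"
    and cov: "(\<forall>u. open_G (fiber Phi u)) \<and> {a..b} \<subseteq> (\<Union>u. fiber Phi u)"
  interpret dstr S by (unfold_locales) (rule assms(1))
  have mono: "t1 \<le> t2 \<Longrightarrow> [t1, u] \<in> Psi \<Longrightarrow> [t2, u] \<in> Psi" for t1 t2 u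
  proof -
    assume h: "t1 \<le> t2" "[t1, u] \<in> Psi"
    show "[t2, u] \<in> Psi"
    proof (cases "t1 = t2")
      case False
      then have "t1 < t2" using h by simp
      then have "fiber Psi t1 \<subseteq> fiber Psi t2" using assms(5) by blast
      then show ?thesis using h unfolding fiber_def by blast
    qed (use h in simp)
  qed
  have psiall: "\<exists>t. [t, u] \<in> Psi" for u
    using assms(6) unfolding fiber_def by blast
  define C where "C = {x. \<exists>t. \<forall>y. a \<le> y \<and> y \<le> x \<longrightarrow> (\<exists>u. [t, u] \<in> Psi \<and> [u, y] \<in> Phi)}"
  have D4: "dfn S (Suc 3) (\<lambda>xs. [xs ! 1, xs ! 3] \<in> Psi \<and> [xs ! 3, xs ! 2] \<in> Phi)"
    using assms(3) Phi by (intro dfn_and dfn_mem2) auto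
  have D3: "dfn S 3 (\<lambda>xs. \<exists>u. [(xs @ [u]) ! 1, (xs @ [u]) ! 3] \<in> Psi \<and> [(xs @ [u]) ! 3, (xs @ [u]) ! 2] \<in> Phi)"
    using dfn_ex[OF D4] .
  have D3': "dfn S (Suc 2) (\<lambda>xs. \<not> (xs ! 2 < a) \<and> \<not> (xs ! 0 < xs ! 2) \<longrightarrow>
     (\<exists>u. [(xs @ [u]) ! 1, (xs @ [u]) ! 3] \<in> Psi \<and> [(xs @ [u]) ! 3, (xs @ [u]) ! 2] \<in> Phi))"
    using D3 by (intro dfn_imp dfn_and dfn_not dfn_ltc dfn_lt) (auto simp: numeral_eq_Suc)
  have D2: "dfn S (Suc (Suc 0)) (\<lambda>xs. \<forall>y. (\<not> ((xs @ [y]) ! 2 < a) \<and> \<not> ((xs @ [y]) ! 0 < (xs @ [y]) ! 2) \<longrightarrow>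
     (\<exists>u. [((xs @ [y]) @ [u]) ! 1, ((xs @ [y]) @ [u]) ! 3] \<in> Psi \<and> [((xs @ [y]) @ [u]) ! 3, ((xs @ [y]) @ [u]) ! 2] \<in> Phi)))"
    using dfn_all[OF D3'] by (simp add: numeral_2_eq_2)
  have D1: "dfn S (Suc 0) (\<lambda>zs. zs ! 0 \<in> C)"
    apply (rule dfn_cong[OF dfn_ex[OF D2]])
    subgoal for xs by (cases xs) (auto simp: C_def not_less numeral_eq_Suc)
    done
  have "(\<lambda>x. [x]) ` C = {zs. length zs = 1 \<and> zs ! 0 \<in> C}"
  proof (intro set_eqI iffI)
    fix zs assume "zs \<in> {zs. length zs = 1 \<and> zs ! 0 \<in> C}"
    then show "zs \<in> (\<lambda>x. [x]) ` C" by (auto simp: length_Suc_conv)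
  qed auto
  then have defC: "definable1 S C" using D1 unfolding definable1_def dfn_def by simp
  have aC: "a \<in> C"
  proof -
    have "a \<in> {a..b}" using ab by simp
    then obtain u where "[u, a] \<in> Phi" using cov unfolding fiber_def by blast
    moreover obtain t where "[t, u] \<in> Psi" using psiall by blast
    ultimately show ?thesis unfolding C_def by (intro CollectI exI[where x=t]) auto
  qed
  have down: "x \<in> C \<Longrightarrow> y \<le> x \<Longrightarrow> y \<in> C" for x y
    unfolding C_def by (auto intro: order_trans)
  have cut: "is_cut C" unfolding is_cut_def using aC down by blast
  have bC: "b \<in> C"
  proof (rule ccontr)
    assume nb: "b \<notin> C"
    then have "C \<noteq> UNIV" by blast
    with cut defC assms(2) have "has_lub C" unfolding definably_complete_def is_gap_def by blast
    then obtain s where s1: "\<forall>x\<in>C. x \<le> s" and s2: "\<And>u. (\<forall>x\<in>C. x \<le> u) \<Longrightarrow> s \<le> u"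
      unfolding has_lub_def by blast
    have ub: "\<forall>x\<in>C. x \<le> b" using nb down by (meson linear)
    have "s \<le> b" using s2 ub by blast
    moreover have "a \<le> s" using s1 aC by blast
    ultimately obtain u0 where u0: "[u0, s] \<in> Phi" using cov unfolding fiber_def by auto
    have "open_G (fiber Phi u0)" using cov by blast
    then obtain c d where cd: "c < s" "s < d" "{c<..<d} \<subseteq> fiber Phi u0"
      using u0 unfolding open_G_def fiber_def by blast
    obtain t2 where t2: "[t2, u0] \<in> Psi" using psiall by blast
    have "\<not> (\<forall>x\<in>C. x \<le> c)" using s2 cd(1) by (meson not_le)
    then obtain x where x: "x \<in> C" "c < x" by (auto simp: not_le)
    then obtain t1 where t1: "\<forall>y. a \<le> y \<and> y \<le> x \<longrightarrow> (\<exists>u. [t1, u] \<in> Psi \<and> [u, y] \<in> Phi)"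
      unfolding C_def by blast
    obtain e where e: "s < e" "e < d" using dense cd(2) by blast
    have "e \<in> C" unfolding C_def
    proof (rule CollectI, rule exI[where x="max t1 t2"], intro allI impI)
      fix y assume y: "a \<le> y \<and> y \<le> e"
      show "\<exists>u. [max t1 t2, u] \<in> Psi \<and> [u, y] \<in> Phi"
      proof (cases "y \<le> x")
        case True
        then obtain u where "[t1, u] \<in> Psi" "[u, y] \<in> Phi" using t1 y by blast
        then show ?thesis using mono[of t1 "max t1 t2"] by auto
      next
        case False
        then have "y \<in> {c<..<d}" using x y e by auto
        then have "[u0, y] \<in> Phi" using cd(3) unfolding fiber_def by auto
        then show ?thesis using mono[of t2 "max t1 t2"] t2 by auto
      qed
    qed
    then have "e \<le> s" using s1 by blast
    then show False using e by simp
  qed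
  then obtain t where t: "\<forall>y. a \<le> y \<and> y \<le> b \<longrightarrow> (\<exists>u. [t, u] \<in> Psi \<and> [u, y] \<in> Phi)"
    unfolding C_def by blast
  show "\<exists>t0. {a..b} \<subseteq> (\<Union>u\<in>fiber Psi t0. fiber Phi u)"
    using t unfolding fiber_def by (intro exI[where x=t]) auto
qed

end
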